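(* Let $C$ be a linear code of length $n$ over $B_k$ such that $C=\overline{\Psi}_k^{-1}(C_1,\dots,C_{2^k})$ for some linear codes $C_1,\dots,C_{2^k}$ of length $n$ over $\mathbb{F}_{p^r}$. Then $d_H(C)=\min_{1\le i\le 2^k}d_H(C_i)$.
   Context: Let $p$ be a prime, $r\ge 1$, $\mathbb{F}_{p^r}$ the field with $p^r$ elements, and for $k\ge1$ let $B_k=\mathbb{F}_{p^r}[v_1,\dots,v_k]/\langle v_i^2-v_i,\ v_iv_j-v_jv_i\rangle$. A linear code over $B_k$ is a $B_k$-submodule of $B_k^n$; a linear code over $\mathbb{F}_{p^r}$ is a subspace of $\mathbb{F}_{p^r}^n$. For $H\subseteq\{1,\dots,k\}$ put $v_H=\prod_{i\in H}v_i$ ($v_\emptyset=1$); every $a\in B_k$ is uniquely $a=\sum_{H}\alpha_Hv_H$ with $\alpha_H\in\mathbb{F}_{p^r}$. Fix an enumeration $H_1,\dots,H_{2^k}$ of the subsets of $\{1,\dots,k\}$ and define $\Psi_k:B_k\to\mathbb{F}_{p^r}^{2^k}$ by $\Psi_k(a)=\big(\sum_{H\subseteq H_1}\alpha_H,\dots,\sum_{H\subseteq H_{2^k}}\alpha_H\big)$. For subsets $C_1,\dots,C_{2^k}\subseteq\mathbb{F}_{p^r}^n$, $\overline{\Psi}_k^{-1}(C_1,\dots,C_{2^k})$ is the set of $(a_1,\dots,a_n)\in B_k^n$ such that for each $j$ the vector $(\Psi_k(a_1)_j,\dots,\Psi_k(a_n)_j)$ lies in $C_j$. The Hamming weight of a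 vector over a ring is its number of nonzero coordinates, and $d_H$ of a linear code is the minimum Hamming weight of its nonzero codewords (with $d_H(\{0\})=+\infty$). *)

theory Defs
  imports Main "HOL-Computational_Algebra.Primes" "HOL-Library.Extended_Nat"
begin

text \<open>Elements of B_k = F[v_1..v_k]/(v_i^2 - v_i, v_i v_j - v_j v_i) are represented by
  their unique coordinate functions H \<mapsto> alpha_H (H \<subseteq> {1..k}), i.e. a = sum_H alpha_H v_H.\<close>

definition Bk :: "nat \<Rightarrow> (nat set \<Rightarrow> 'f::field) set" where
  "Bk k = {a. \<forall>H. \<not> H \<subseteq> {1..k} \<longrightarrow> a H = 0}"

text \<open>Ring multiplication in B_k: v_H v_G = v_(H \<union> G).\<close>
definition bmult :: "nat \<Rightarrow> (nat set \<Rightarrow> 'f::field) \<Rightarrow> (nat set \<Rightarrow> 'f) \<Rightarrow> (nat set \<Rightarrow> 'f)" where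
  "bmult k a b = (\<lambda>K. \<Sum>(H,G)\<in>{(H,G). H \<subseteq> {1..k} \<and> G \<subseteq> {1..k} \<and> H \<union> G = K}. a H * b G)"

definition Bvecs :: "nat \<Rightarrow> nat \<Rightarrow> (nat \<Rightarrow> nat set \<Rightarrow> 'f::field) set" where
  "Bvecs k n = {x. (\<forall>i. x i \<in> Bk k) \<and> (\<forall>i\<ge>n. x i = (\<lambda>_. 0))}"

definition Fvecs :: "nat \<Rightarrow> (nat \<Rightarrow> 'f::field) set" where
  "Fvecs n = {x. \<forall>i\<ge>n. x i = 0}"

definition lin_code_B :: "nat \<Rightarrow> nat \<Rightarrow> (nat \<Rightarrow> nat set \<Rightarrow> 'f::field) set \<Rightarrow> bool" where
  "lin_code_B k n C \<longleftrightarrow> C \<subseteq> Bvecs k n \<and> (\<lambda>_ _. 0) \<in> C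
     \<and> (\<forall>x\<in>C. \<forall>y\<in>C. (\<lambda>i H. x i H + y i H) \<in> C)
     \<and> (\<forall>a\<in>Bk k. \<forall>x\<in>C. (\<lambda>i. bmult k a (x i)) \<in> C)"

definition lin_code_F :: "nat \<Rightarrow> (nat \<Rightarrow> 'f::field) set \<Rightarrow> bool" where
  "lin_code_F n C \<longleftrightarrow> C \<subseteq> Fvecs n \<and> (\<lambda>_. 0) \<in> C
     \<and> (\<forall>x\<in>C. \<forall>y\<in>C. (\<lambda>i. x i + y i) \<in> C)
     \<and> (\<forall>c. \<forall>x\<in>C. (\<lambda>i. c * x i) \<in> C)"

definition psi :: "(nat \<Rightarrow> nat set) \<Rightarrow> (nat set \<Rightarrow> 'f::field) \<Rightarrow> nat \<Rightarrow> 'f" where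
  "psi Hs a j = (\<Sum>H\<in>Pow (Hs j). a H)"

definition psibar_inv :: "nat \<Rightarrow> nat \<Rightarrow> (nat \<Rightarrow> nat set) \<Rightarrow> (nat \<Rightarrow> (nat \<Rightarrow> 'f::field) set)
    \<Rightarrow> (nat \<Rightarrow> nat set \<Rightarrow> 'f) set" where
  "psibar_inv k n Hs Cs = {x \<in> Bvecs k n. \<forall>j\<in>{1..2^k}. (\<lambda>i. psi Hs (x i) j) \<in> Cs j}"

text \<open>Hamming weights and minimum distances (Inf {} = \<infinity>).\<close>
definition wtB :: "(nat \<Rightarrow> nat set \<Rightarrow> 'f::field) \<Rightarrow> nat" where
  "wtB x = card {i. x i \<noteq> (\<lambda>_. 0)}"

definition wtF :: "(nat \<Rightarrow> 'f::field) \<Rightarrow> nat" where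
  "wtF x = card {i. x i \<noteq> 0}"

definition dH_B :: "(nat \<Rightarrow> nat set \<Rightarrow> 'f::field) set \<Rightarrow> enat" where
  "dH_B C = (INF x\<in>C - {(\<lambda>_ _. 0)}. enat (wtB x))"

definition dH_F :: "(nat \<Rightarrow> 'f::field) set \<Rightarrow> enat" where
  "dH_F C = (INF x\<in>C - {(\<lambda>_. 0)}. enat (wtF x))"

end

theory Submission
  imports Defs
begin

lemma alt_sum_zero:
  assumes "finite S" "S \<noteq> {}"
  shows "(\<Sum>D\<in>Pow S. (-1::'a::comm_ring_1) ^ card D) = 0"
proof -
  obtain x S' where S: "S = insert x S'" "x \<notin> S'" using assms(2)
    by (metis Set.set_insert ex_in_conv)
  have fin: "finite S'" using assms(1) S by auto
  have "Pow S = Pow S' \<union> insert x ` Pow S'" using S by (simp add: Pow_insert)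
  moreover have "Pow S' \<inter> insert x ` Pow S' = {}" using S by auto
  ultimately have "(\<Sum>D\<in>Pow S. (-1::'a) ^ card D) =
      (\<Sum>D\<in>Pow S'. (-1::'a) ^ card D) + (\<Sum>D\<in>insert x ` Pow S'. (-1::'a) ^ card D)"
    using fin by (simp add: sum.union_disjoint)
  also have "(\<Sum>D\<in>insert x ` Pow S'. (-1::'a) ^ card D) = (\<Sum>D\<in>Pow S'. (-1::'a) ^ card (insert x D))"
  proof -
    have "inj_on (insert x) (Pow S')"
    proof (rule inj_onI)
      fix A B assume AB: "A \<in> Pow S'" "B \<in> Pow S'" "insert x A = insert x B"
      then have xA: "x \<notin> A" and xB: "x \<notin> B" using S(2) by auto
      show "A = B" using insert_ident[OF xA xB] AB(3) by simp
    qed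
    then show ?thesis by (simp add: sum.reindex)
  qed
  also have "\<dots> = (\<Sum>D\<in>Pow S'. - ((-1::'a) ^ card D))"
  proof (rule sum.cong)
    fix D assume "D \<in> Pow S'"
    then have "x \<notin> D" "finite D" using S fin finite_subset by auto
    then show "(-1::'a) ^ card (insert x D) = - ((-1) ^ card D)" by simp
  qed simp
  finally show ?thesis by (simp add: sum_negf)
qed

definition eidem :: "nat \<Rightarrow> nat set \<Rightarrow> nat set \<Rightarrow> 'f::field" where
  "eidem k H G = (if H \<subseteq> G \<and> G \<subseteq> {1..k} then (-1) ^ card (G - H) else 0)"

lemma eidem_Bk: "eidem k H \<in> Bk k"
  unfolding Bk_def eidem_def by auto

lemma eidem_H: "H \<subseteq> {1..k} \<Longrightarrow> eidem k H H = 1"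
  unfolding eidem_def by auto

lemma eidem_psi:
  assumes "H \<subseteq> {1..k}" "H' \<subseteq> {1..k}"
  shows "(\<Sum>G\<in>Pow H'. (eidem k H G :: 'f::field)) = (if H' = H then 1 else 0)"
proof (cases "H \<subseteq> H'")
  case False
  then have "\<forall>G\<in>Pow H'. (eidem k H G :: 'f) = 0" unfolding eidem_def by auto
  then show ?thesis using False by auto
next
  case True
  have finH': "finite H'" using assms(2) finite_subset by blast
  have "(\<Sum>G\<in>Pow H'. (eidem k H G :: 'f)) = (\<Sum>G\<in>{G\<in>Pow H'. H \<subseteq> G}. (-1) ^ card (G - H))"
  proof -
    have "(\<Sum>G\<in>Pow H'. (eidem k H G :: 'f)) = (\<Sum>G\<in>{G\<in>Pow H'. H \<subseteq> G}. eidem k H G)"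
      by (rule sum.mono_neutral_right) (auto simp: finH' eidem_def)
    also have "\<dots> = (\<Sum>G\<in>{G\<in>Pow H'. H \<subseteq> G}. (-1) ^ card (G - H))"
      using assms(2) by (intro sum.cong) (auto simp: eidem_def)
    finally show ?thesis .
  qed
  also have "\<dots> = (\<Sum>D\<in>Pow (H' - H). (-1::'f) ^ card D)"
    by (rule sum.reindex_bij_witness[where i = "\<lambda>D. D \<union> H" and j = "\<lambda>G. G - H"])
       (use True in auto)
  also have "\<dots> = (if H' = H then 1 else 0)"
  proof (cases "H' = H")
    case True then show ?thesis by simp
  next
    case False
    then have "H' - H \<noteq> {}" using \<open>H \<subseteq> H'\<close> by auto
    then show ?thesis using alt_sum_zero[of "H' - H"] finH' False by auto
  qed
  finally show ?thesis .
qed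

lemma psi_nonzero:
  assumes "a \<in> Bk k" "a \<noteq> (\<lambda>_. 0)" "bij_betw Hs {1..2^k} (Pow {1..k})"
  shows "\<exists>j\<in>{1..2^k}. psi Hs a j \<noteq> 0"
proof -
  let ?S = "{H. a H \<noteq> 0}"
  have sub: "?S \<subseteq> Pow {1..k}" using assms(1) unfolding Bk_def by auto
  have fin: "finite ?S" using sub finite_subset by blast
  have ne: "?S \<noteq> {}" using assms(2) by auto
  obtain H where H: "H \<in> ?S" "\<forall>G\<in>?S. G \<subseteq> H \<longrightarrow> H = G"
    using finite_has_minimal[OF fin ne] by blast
  have "H \<in> Pow {1..k}" using H sub by blast
  then obtain j where j: "j \<in> {1..2^k}" "Hs j = H"
    using assms(3) unfolding bij_betw_def by (metis imageE)
  have finH: "finite H" using \<open>H \<in> Pow {1..k}\<close> finite_subset by blast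
  have "psi Hs a j = a H + (\<Sum>G\<in>Pow H - {H}. a G)"
    unfolding psi_def j(2) using finH by (simp add: sum.remove)
  also have "(\<Sum>G\<in>Pow H - {H}. a G) = 0"
    using H by (intro sum.neutral) auto
  finally have "psi Hs a j = a H" by simp
  moreover have "a H \<noteq> 0" using H(1) by simp
  ultimately show ?thesis using j(1) by metis
qed

theorem lemma5p5:
  fixes p r k n :: nat
    and Hs :: "nat \<Rightarrow> nat set"
    and C :: "(nat \<Rightarrow> nat set \<Rightarrow> 'f::{field,finite}) set"
    and Cs :: "nat \<Rightarrow> (nat \<Rightarrow> 'f) set"
  assumes "prime p" and "r \<ge> 1" and "card (UNIV :: 'f set) = p ^ r"
    and "k \<ge> 1"
    and "bij_betw Hs {1..2^k} (Pow {1..k})"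
    and "lin_code_B k n C"
    and "\<forall>j\<in>{1..2^k}. lin_code_F n (Cs j)"
    and "C = psibar_inv k n Hs Cs"
  shows "dH_B C = (INF j\<in>{1..2^k}. dH_F (Cs j))"
proof (rule antisym)
  show "dH_B C \<le> (INF j\<in>{1..2^k}. dH_F (Cs j))"
  proof (rule INF_greatest)
    fix j assume j: "j \<in> {1..(2::nat)^k}"
    show "dH_B C \<le> dH_F (Cs j)" unfolding dH_F_def
    proof (rule INF_greatest)
      fix c assume c: "c \<in> Cs j - {\<lambda>_. 0}"
      have cF: "c \<in> Fvecs n" using assms(7) j c unfolding lin_code_F_def by auto
      define H where "H = Hs j"
      have HP: "H \<subseteq> {1..k}" using assms(5) j unfolding H_def bij_betw_def by auto
      define x where "x = (\<lambda>i G. c i * (eidem k H G :: 'f))"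
      have psix: "psi Hs (x i) l = (if l = j then c i else 0)" if l: "l \<in> {1..2^k}" for i l
      proof -
        have Hl: "Hs l \<subseteq> {1..k}" using assms(5) l unfolding bij_betw_def by auto
        have "psi Hs (x i) l = c i * (\<Sum>G\<in>Pow (Hs l). eidem k H G)"
          unfolding psi_def x_def by (simp add: sum_distrib_left)
        also have "\<dots> = c i * (if Hs l = H then 1 else 0)" by (simp only: eidem_psi[OF HP Hl])
        also have "(Hs l = H) = (l = j)" using assms(5) l j unfolding H_def bij_betw_def inj_on_def
          by blast
        finally show ?thesis by simp
      qed
      have xB: "x \<in> Bvecs k n"
        using cF eidem_Bk[of k H] unfolding Bvecs_def Fvecs_def Bk_def x_def by auto
      have "x \<in> C"
        unfolding assms(8) psibar_inv_def
      proof (intro CollectI conjI ballI xB)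
        fix l assume l: "l \<in> {1..(2::nat)^k}"
        show "(\<lambda>i. psi Hs (x i) l) \<in> Cs l"
        proof (cases "l = j")
          case True
          then show ?thesis using psix[OF l] c by simp
        next
          case False
          then show ?thesis using psix[OF l] assms(7) l unfolding lin_code_F_def by simp
        qed
      qed
      have supp: "{i. x i \<noteq> (\<lambda>_. 0)} = {i. c i \<noteq> 0}"
      proof -
        have "x i \<noteq> (\<lambda>_. 0) \<longleftrightarrow> c i \<noteq> 0" for i
        proof
          assume "x i \<noteq> (\<lambda>_. 0)" then show "c i \<noteq> 0" unfolding x_def by auto
        next
          assume "c i \<noteq> 0"
          moreover have "(eidem k H H :: 'f) = 1" by (rule eidem_H[OF HP])
          ultimately have "x i H \<noteq> 0" unfolding x_def by simp
          then show "x i \<noteq> (\<lambda>_. 0)" by auto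
        qed
        then show ?thesis by auto
      qed
      obtain i0 where "c i0 \<noteq> 0" using c by fastforce
      then have "i0 \<in> {i. x i \<noteq> (\<lambda>_. 0)}" using supp by simp
      then have "x \<noteq> (\<lambda>_ _. 0)" by auto
      then have "dH_B C \<le> enat (wtB x)" unfolding dH_B_def using \<open>x \<in> C\<close> by (intro INF_lower) auto
      also have "wtB x = wtF c" unfolding wtB_def wtF_def supp ..
      finally show "dH_B C \<le> enat (wtF c)" .
    qed
  qed
next
  show "(INF j\<in>{1..2^k}. dH_F (Cs j)) \<le> dH_B C" unfolding dH_B_def
  proof (rule INF_greatest)
    fix x assume x: "x \<in> C - {\<lambda>_ _. 0}"
    then have xB: "x \<in> Bvecs k n" and xC: "\<forall>j\<in>{1..2^k}. (\<lambda>i. psi Hs (x i) j) \<in> Cs j"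
      using assms(8) unfolding psibar_inv_def by auto
    obtain i where i: "x i \<noteq> (\<lambda>_. 0)" using x by auto
    have "x i \<in> Bk k" using xB unfolding Bvecs_def by auto
    then obtain j where j: "j \<in> {1..2^k}" "psi Hs (x i) j \<noteq> 0"
      using psi_nonzero[OF _ i assms(5)] by blast
    define c where "c = (\<lambda>i. psi Hs (x i) j)"
    have cC: "c \<in> Cs j - {\<lambda>_. 0}" using xC j unfolding c_def by (auto dest: fun_cong[where x = i])
    have ss: "{i. c i \<noteq> 0} \<subseteq> {i. x i \<noteq> (\<lambda>_. 0)}" unfolding c_def psi_def by auto
    have "{i. x i \<noteq> (\<lambda>_. 0)} \<subseteq> {..<n}" using xB unfolding Bvecs_def by (auto simp: not_less)
    then have fin: "finite {i. x i \<noteq> (\<lambda>_. 0)}" using finite_subset by blast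
    have "(INF j\<in>{1..2^k}. dH_F (Cs j)) \<le> dH_F (Cs j)" using j by (intro INF_lower)
    also have "\<dots> \<le> enat (wtF c)" unfolding dH_F_def using cC by (intro INF_lower)
    also have "wtF c \<le> wtB x" unfolding wtF_def wtB_def using card_mono[OF fin ss] .
    finally show "(INF j\<in>{1..2^k}. dH_F (Cs j)) \<le> enat (wtB x)" by simp
  qed
qed

end
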